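(* Let $\mu_1,\ldots,\mu_n$ be continuous probability measures on $\mathbb{R}^n$ and $\alpha_1,\ldots,\alpha_n\in[0,1]$. Let $S_1,\ldots,S_n\subset\mathbb{R}^n$ satisfy one of the following: (1) $S_1,\ldots,S_n$ are compact, can be separated by hyperplanes, and $\mu_i(S_i)\ge\max\{\alpha_i,1-\alpha_i\}$ for all $i\in[n]$; or (2) $S_1,\ldots,S_n$ are closed, can be separated by hyperplanes, and $\mu_i(S_i)>\max\{\alpha_i,1-\alpha_i\}$ for all $i\in[n]$. Then there exists an oriented hyperplane $H$ such that $\mu_i(H^+)=\alpha_i$ for all $i\in[n]$.
   Context: A continuous probability measure on $\mathbb{R}^n$ is a Borel probability measure absolutely continuous with respect to Lebesgue measure. For an oriented hyperplane $H$, $H^+$ is the closed half-space in the direction of its normal and $H^-$ the other closed half-space; $H^{+1}=H^+$, $H^{-1}=H^-$. Sets $S_1,\ldots,S_n\subset\mathbb{R}^n$ can be separated by hyperplanes if for every function $\sigma:[n]\to\{-1,+1\}$ there is a hyperplane $H$ with $S_i$ contained in the open half-space $\operatorname{int}H^{\sigma(i)}$ for every $i$. *)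

theory Defs
  imports "HOL-Probability.Probability"
begin

definition hplus :: "'a::euclidean_space \<Rightarrow> real \<Rightarrow> 'a set" where
  "hplus a b = {x. a \<bullet> x \<ge> b}"

definition hminus :: "'a::euclidean_space \<Rightarrow> real \<Rightarrow> 'a set" where
  "hminus a b = {x. a \<bullet> x \<le> b}"

definition hside :: "bool \<Rightarrow> 'a::euclidean_space \<Rightarrow> real \<Rightarrow> 'a set" where
  "hside s a b = (if s then hplus a b else hminus a b)"

definition continuous_prob :: "'a::euclidean_space measure \<Rightarrow> bool" where
  "continuous_prob M \<longleftrightarrow> sets M = sets borel \<and> prob_space M \<and> absolutely_continuous lborel M"

definition separable_by_hyperplanes :: "('n \<Rightarrow> 'a::euclidean_space set) \<Rightarrow> bool" where
  "separable_by_hyperplanes S \<longleftrightarrow>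
     (\<forall>\<sigma> :: 'n \<Rightarrow> bool. \<exists>a b. a \<noteq> 0 \<and> (\<forall>i. S i \<subseteq> interior (hside (\<sigma> i) a b)))"

end

theory Submission imports Defs begin
lemma hp_cont:
  fixes M :: "'a::euclidean_space measure" and c :: "'a \<times> real"
  assumes cp: "continuous_prob M" and c0: "c \<noteq> 0"
  shows "isCont (\<lambda>p. measure M (hplus (fst p) (snd p))) c"
proof -
  have sM: "sets M = sets borel" and ps: "prob_space M" and ac: "absolutely_continuous lborel M"
    using cp unfolding continuous_prob_def by auto
  interpret prob_space M by (rule ps)
  have sp: "space M = UNIV" using sets_eq_imp_space_eq[OF sM] by simp
  have hb: "hplus a b \<in> sets M" for a b
    unfolding hplus_def sM by (rule borel_closed) (rule closed_halfspace_ge)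
  define Z where "Z = {x. fst c \<bullet> x = snd c}"
  have "fst c \<noteq> 0 \<or> snd c \<noteq> 0" using c0 by (cases c) (auto simp: zero_prod_def)
  then have "negligible Z" unfolding Z_def by (rule negligible_hyperplane)
  then have "Z \<in> null_sets lebesgue" by (simp add: negligible_iff_null_sets)
  moreover have "Z \<in> sets lborel" unfolding Z_def
    by (simp add: borel_closed closed_hyperplane)
  ultimately have "Z \<in> null_sets lborel" using null_sets_completion_iff by blast
  then have Zn: "Z \<in> null_sets M" using ac unfolding absolutely_continuous_def by blast
  show ?thesis
    unfolding continuous_at_sequentially
  proof (intro allI impI)
    fix X :: "nat \<Rightarrow> 'a \<times> real" assume X: "X \<longlonglongrightarrow> c"
    have eq: "measure M (hplus a b) = integral\<^sup>L M (indicator (hplus a b))" for a b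
      by (simp add: integral_indicator sp)
    have "(\<lambda>k. integral\<^sup>L M (indicator (hplus (fst (X k)) (snd (X k))) :: _ \<Rightarrow> real))
        \<longlonglongrightarrow> integral\<^sup>L M (indicator (hplus (fst c) (snd c)))"
    proof (rule integral_dominated_convergence[where w="\<lambda>_. 1"])
      show "indicator (hplus (fst c) (snd c)) \<in> borel_measurable M" using hb by simp
      show "\<And>i. indicator (hplus (fst (X i)) (snd (X i))) \<in> borel_measurable M" using hb by simp
      show "integrable M (\<lambda>_. 1::real)" by simp
      show "\<And>i. AE x in M. norm (indicator (hplus (fst (X i)) (snd (X i))) x :: real) \<le> 1"
        by (simp add: indicator_def)
      show "AE x in M. (\<lambda>i. indicator (hplus (fst (X i)) (snd (X i))) x :: real)
          \<longlonglongrightarrow> indicator (hplus (fst c) (snd c)) x"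
        using AE_not_in[OF Zn]
      proof (rule AE_mp, intro AE_I2 impI)
        fix x assume "x \<notin> Z"
        then have ne: "fst c \<bullet> x - snd c \<noteq> 0" unfolding Z_def by auto
        have lim: "(\<lambda>k. fst (X k) \<bullet> x - snd (X k)) \<longlonglongrightarrow> fst c \<bullet> x - snd c"
          by (intro tendsto_intros X)
        show "(\<lambda>i. indicator (hplus (fst (X i)) (snd (X i))) x :: real)
          \<longlonglongrightarrow> indicator (hplus (fst c) (snd c)) x"
        proof (cases "fst c \<bullet> x - snd c > 0")
          case True
          then have "eventually (\<lambda>k. fst (X k) \<bullet> x - snd (X k) > 0) sequentially"
            using lim order_tendstoD(1) by blast
          then have "eventually (\<lambda>k. (indicator (hplus (fst (X k)) (snd (X k))) x :: real)
               = indicator (hplus (fst c) (snd c)) x) sequentially"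
            by eventually_elim (use True in \<open>auto simp: hplus_def indicator_def\<close>)
          then show ?thesis by (rule tendsto_eventually)
        next
          case False
          then have F: "fst c \<bullet> x - snd c < 0" using ne by linarith
          then have "eventually (\<lambda>k. fst (X k) \<bullet> x - snd (X k) < 0) sequentially"
            using lim order_tendstoD(2) by blast
          then have "eventually (\<lambda>k. (indicator (hplus (fst (X k)) (snd (X k))) x :: real)
               = indicator (hplus (fst c) (snd c)) x) sequentially"
            by eventually_elim (use F in \<open>auto simp: hplus_def indicator_def\<close>)
          then show ?thesis by (rule tendsto_eventually)
        qed
      qed
    qed
    then show "((\<lambda>p. measure M (hplus (fst p) (snd p))) \<circ> X) \<longlonglongrightarrow> measure M (hplus (fst c) (snd c))"
      by (simp add: eq o_def)
  qed
qed

lemma PM: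
  fixes G :: "real^'n \<Rightarrow> real^'n"
  assumes cont: "continuous_on (cbox (-1) 1) G"
    and up: "\<And>t i. t \<in> cbox (-1) 1 \<Longrightarrow> t$i = 1 \<Longrightarrow> G t $ i \<ge> 0"
    and lo: "\<And>t i. t \<in> cbox (-1) 1 \<Longrightarrow> t$i = -1 \<Longrightarrow> G t $ i \<le> 0"
  shows "\<exists>t\<in>cbox (-1) 1. G t = 0"
proof -
  define h where "h t = (\<chi> i. max (-1) (min 1 (t$i - G t $ i)))" for t :: "real^'n"
  have hc: "continuous_on (cbox (-1) 1) h" unfolding h_def
    by (intro continuous_on_vec_lambda continuous_intros continuous_on_component cont)
  have hi: "h \<in> cbox (-1) 1 \<rightarrow> cbox (-1) 1"
    by (auto simp: h_def mem_box_cart)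
  have ne: "cbox (-1) (1::real^'n) \<noteq> {}"
  proof -
    have "(0::real^'n) \<in> cbox (-1) 1" by (simp add: mem_box_cart)
    then show ?thesis by blast
  qed
  obtain t where t: "t \<in> cbox (-1) 1" "h t = t"
    using brouwer[OF compact_cbox convex_box(1) ne hc hi] by blast
  have "G t = 0"
  proof (subst vec_eq_iff, intro allI)
    fix i
    have e: "max (-1) (min 1 (t$i - G t $ i)) = t$i" using t(2) by (auto simp: h_def vec_eq_iff)
    have b: "-1 \<le> t$i" "t$i \<le> 1" using t(1) by (auto simp: mem_box_cart)
    show "G t $ i = 0 $ i"
    proof (cases "t$i = 1")
      case True then show ?thesis using up[OF t(1) True] e by simp
    next
      case F1: False
      show ?thesis
      proof (cases "t$i = -1")
        case True then show ?thesis using lo[OF t(1) True] e by simp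
      next
        case False
        then show ?thesis using F1 e b by (simp add: max_def min_def split: if_splits)
      qed
    qed
  qed
  then show ?thesis using t by blast
qed

lemma norm_fst_le': "norm (fst z) \<le> norm (z :: 'a::real_normed_vector \<times> 'b::real_normed_vector)"
  by (cases z) (simp add: norm_Pair real_le_rsqrt)

lemma norm_snd_le': "norm (snd z) \<le> norm (z :: 'a::real_normed_vector \<times> 'b::real_normed_vector)"
  by (cases z) (simp add: norm_Pair real_le_rsqrt)

lemma open_Qp:
  fixes S :: "'a::euclidean_space set"
  assumes "compact S"
  shows "open {p::'a\<times>real. \<forall>x\<in>S. fst p \<bullet> x > snd p}"
proof (cases "S = {}")
  case True then show ?thesis by simp
next
  case False
  obtain R where R: "R > 0" "\<And>x. x \<in> S \<Longrightarrow> norm x \<le> R"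
    using compact_imp_bounded[OF assms] unfolding bounded_pos by blast
  show ?thesis
  proof (rule openI)
    fix p assume p: "p \<in> {p::'a\<times>real. \<forall>x\<in>S. fst p \<bullet> x > snd p}"
    have "compact ((\<lambda>x. fst p \<bullet> x - snd p) ` S)"
      by (intro compact_continuous_image assms continuous_intros)
    then obtain m where m: "m \<in> (\<lambda>x. fst p \<bullet> x - snd p) ` S"
        "\<And>y. y \<in> (\<lambda>x. fst p \<bullet> x - snd p) ` S \<Longrightarrow> m \<le> y"
      using compact_attains_inf[of "(\<lambda>x. fst p \<bullet> x - snd p) ` S"] False by blast
    have m0: "m > 0" using m(1) p by auto
    show "\<exists>e>0. ball p e \<subseteq> {p::'a\<times>real. \<forall>x\<in>S. fst p \<bullet> x > snd p}"
    proof (intro exI conjI)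
      show "m / (R + 1) > 0" using m0 R by simp
      show "ball p (m / (R + 1)) \<subseteq> {p::'a\<times>real. \<forall>x\<in>S. fst p \<bullet> x > snd p}"
      proof (clarsimp)
        fix a b x assume d: "dist p (a, b) < m / (R + 1)" and x: "x \<in> S"
        define d where "d = norm (p - (a,b))"
        have dd: "d < m / (R+1)" using d by (simp add: dist_norm d_def)
        then have dd': "d * (R+1) < m" using R by (simp add: pos_less_divide_eq)
        have n1: "norm (fst p - a) \<le> d" using norm_fst_le'[of "p - (a,b)"] by (simp add: d_def)
        have n2: "\<bar>snd p - b\<bar> \<le> d" using norm_snd_le'[of "p - (a,b)"] by (simp add: d_def)
        have "\<bar>(fst p - a) \<bullet> x\<bar> \<le> norm (fst p - a) * norm x" by (rule Cauchy_Schwarz_ineq2)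
        also have "\<dots> \<le> d * R" using n1 R(2)[OF x] by (intro mult_mono) (auto simp: d_def)
        finally have i1: "\<bar>(fst p - a) \<bullet> x\<bar> \<le> d * R" .
        have "m \<le> fst p \<bullet> x - snd p" using m(2) x by auto
        moreover have "fst p \<bullet> x - snd p = (a \<bullet> x - b) + (fst p - a) \<bullet> x - (snd p - b)"
          by (simp add: inner_diff_left)
        moreover have "(fst p - a) \<bullet> x \<le> d * R" using i1 by linarith
        moreover have "d * R + d < m" using dd' by (simp add: distrib_left)
        ultimately show "b < a \<bullet> x" using n2 by linarith
      qed
    qed
  qed
qed

lemma open_Qm:
  fixes S :: "'a::euclidean_space set"
  assumes "compact S"
  shows "open {p::'a\<times>real. \<forall>x\<in>S. fst p \<bullet> x < snd p}"
proof -
  have "{p::'a\<times>real. \<forall>x\<in>S. fst p \<bullet> x < snd p} = uminus -` {p::'a\<times>real. \<forall>x\<in>S. fst p \<bullet> x > snd p}"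
    by auto
  then show ?thesis using open_vimage[OF open_Qp[OF assms], of uminus]
    by (simp add: continuous_on_minus continuous_on_id)
qed

lemma meas_up:
  fixes M :: "'a::euclidean_space measure"
  assumes cp: "continuous_prob M" and S: "closed S" and sub: "\<forall>x\<in>S. a \<bullet> x > b"
    and big: "measure M S \<ge> max \<alpha> (1 - \<alpha>)"
  shows "measure M (hplus a b) \<ge> \<alpha>"
proof -
  have sM: "sets M = sets borel" and ps: "prob_space M"
    using cp unfolding continuous_prob_def by auto
  interpret prob_space M by (rule ps)
  have hb: "hplus a b \<in> sets M"
    unfolding hplus_def sM by (rule borel_closed) (rule closed_halfspace_ge)
  have "S \<subseteq> hplus a b" using sub by (auto simp: hplus_def less_imp_le)
  then have "measure M S \<le> measure M (hplus a b)" using hb by (simp add: finite_measure_mono)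
  then show ?thesis using big by linarith
qed

lemma meas_lo:
  fixes M :: "'a::euclidean_space measure"
  assumes cp: "continuous_prob M" and S: "closed S" and sub: "\<forall>x\<in>S. a \<bullet> x < b"
    and big: "measure M S \<ge> max \<alpha> (1 - \<alpha>)"
  shows "measure M (hplus a b) \<le> \<alpha>"
proof -
  have sM: "sets M = sets borel" and ps: "prob_space M"
    using cp unfolding continuous_prob_def by auto
  interpret prob_space M by (rule ps)
  have hb: "hplus a b \<in> sets M"
    unfolding hplus_def sM by (rule borel_closed) (rule closed_halfspace_ge)
  have Sb: "S \<in> sets M" unfolding sM using S by (rule borel_closed)
  have "hplus a b \<inter> S = {}" using sub by (auto simp: hplus_def)
  then have "measure M (hplus a b \<union> S) = measure M (hplus a b) + measure M S"
    using hb Sb by (simp add: finite_measure_Union)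
  moreover have "measure M (hplus a b \<union> S) \<le> 1" by (rule prob_le_1)
  ultimately show ?thesis using big by linarith
qed

lemma differentiable_prod':
  fixes f :: "'i \<Rightarrow> 'a::real_normed_vector \<Rightarrow> real"
  assumes "\<And>i. i \<in> I \<Longrightarrow> f i differentiable (at x within S)"
  shows "(\<lambda>x. \<Prod>i\<in>I. f i x) differentiable (at x within S)"
proof -
  from assms have "\<forall>i\<in>I. \<exists>D. (f i has_derivative D) (at x within S)"
    unfolding differentiable_def by blast
  then obtain D where "\<And>i. i \<in> I \<Longrightarrow> (f i has_derivative D i) (at x within S)" by metis
  then show ?thesis unfolding differentiable_def by (blast intro: has_derivative_prod)
qed

lemma diff_nth: "(\<lambda>t::real^'n::finite. t$i) differentiable F"
  by (rule bounded_linear_imp_differentiable) (rule bounded_linear_vec_nth)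

lemma Lsum:
  fixes q :: "'j \<Rightarrow> 'a::real_inner \<times> real"
  shows "fst (\<Sum>J\<in>A. c J *\<^sub>R q J) \<bullet> x - snd (\<Sum>J\<in>A. c J *\<^sub>R q J)
     = (\<Sum>J\<in>A. c J * (fst (q J) \<bullet> x - snd (q J)))"
  by (simp add: fst_sum snd_sum inner_sum_left sum_subtractf right_diff_distrib)

lemma main_compact:
  fixes \<mu> :: "'n::finite \<Rightarrow> (real^'n) measure"
    and \<alpha> :: "'n \<Rightarrow> real"
    and S :: "'n \<Rightarrow> (real^'n) set"
  assumes cont: "\<And>i. continuous_prob (\<mu> i)"
    and comp: "\<And>i. compact (S i)"
    and sep: "separable_by_hyperplanes S"
    and big: "\<And>i. measure (\<mu> i) (S i) \<ge> max (\<alpha> i) (1 - \<alpha> i)"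
  shows "\<exists>a b. a \<noteq> 0 \<and> (\<forall>i. measure (\<mu> i) (hplus a b) = \<alpha> i)"
proof -
  have clS: "closed (S i)" for i using comp by (simp add: compact_imp_closed)
  have "\<forall>J::'n set. \<exists>p::(real^'n)\<times>real. fst p \<noteq> 0 \<and> (\<forall>i. S i \<subseteq> interior (hside (i \<in> J) (fst p) (snd p)))"
  proof
    fix J :: "'n set"
    have "\<exists>a b. a \<noteq> 0 \<and> (\<forall>i. S i \<subseteq> interior (hside (i \<in> J) a b))"
      using sep[unfolded separable_by_hyperplanes_def, rule_format, of "\<lambda>i. i \<in> J"] by simp
    then obtain a b where "a \<noteq> 0" "\<forall>i. S i \<subseteq> interior (hside (i \<in> J) a b)" by blast
    then show "\<exists>p::(real^'n)\<times>real. fst p \<noteq> 0 \<and> (\<forall>i. S i \<subseteq> interior (hside (i \<in> J) (fst p) (snd p)))"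
      by (intro exI[of _ "(a,b)"]) simp
  qed
  then obtain P where P: "\<And>J. fst (P J) \<noteq> 0"
      "\<And>J i. S i \<subseteq> interior (hside (i \<in> J) (fst (P J)) (snd (P J)))"
    by metis
  define Qs where "Qs i s = (if s then {p::(real^'n)\<times>real. \<forall>x\<in>S i. fst p \<bullet> x > snd p}
      else {p::(real^'n)\<times>real. \<forall>x\<in>S i. fst p \<bullet> x < snd p})" for i s
  have Qopen: "open (Qs i s)" for i s
    unfolding Qs_def using open_Qp[OF comp] open_Qm[OF comp] by simp
  have PQ: "P J \<in> Qs i (i \<in> J)" for J i
  proof (cases "i \<in> J")
    case True
    then show ?thesis using P(2)[of i J] interior_halfspace_ge[OF P(1)[of J]]
      by (auto simp: Qs_def hside_def hplus_def)
  next
    case False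
    then show ?thesis using P(2)[of i J] interior_halfspace_le[OF P(1)[of J]]
      by (auto simp: Qs_def hside_def hminus_def)
  qed
  define w where "w J t = (\<Prod>i\<in>J. (1 + t$i)/2) * (\<Prod>i\<in>UNIV - J. (1 - t$i)/2)"
    for J :: "'n set" and t :: "real^'n"
  have wsum: "(\<Sum>J\<in>Pow UNIV. w J t) = 1" for t
  proof -
    have "(\<Prod>i\<in>(UNIV::'n set). (1 + t$i)/2 + (1 - t$i)/2) = (\<Sum>J\<in>Pow UNIV. w J t)"
      unfolding w_def by (rule prod_add) simp
    moreover have "(\<Prod>i\<in>(UNIV::'n set). (1 + t$i)/2 + (1 - t$i)/2) = 1"
      by (simp add: add_divide_distrib[symmetric])
    ultimately show ?thesis by simp
  qed
  define cube where "cube = cbox (-1) (1::real^'n)"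
  have incube: "-1 \<le> t$i \<and> t$i \<le> 1" if "t \<in> cube" for t i
    using that by (simp add: cube_def mem_box_cart)
  have wnn: "w J t \<ge> 0" if "t \<in> cube" for J t
  proof -
    have "0 \<le> 1 + t$i" "0 \<le> 1 - t$i" for i using incube[OF that, of i] by auto
    then show ?thesis unfolding w_def by (intro mult_nonneg_nonneg prod_nonneg) auto
  qed
  have w0p: "w J t = 0" if "t$i = 1" "i \<notin> J" for J t i
  proof -
    have "(\<Prod>i\<in>UNIV - J. (1 - t$i)/2) = 0"
      using that by (intro prod_zero) auto
    then show ?thesis by (simp add: w_def)
  qed
  have w0m: "w J t = 0" if "t$i = -1" "i \<in> J" for J t i
  proof -
    have "(\<Prod>i\<in>J. (1 + t$i)/2) = 0"
      using that by (intro prod_zero) (auto intro!: bexI[of _ i])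
    then show ?thesis by (simp add: w_def)
  qed
  define \<phi> where "\<phi> t = (\<Sum>J\<in>Pow UNIV. w J t *\<^sub>R P J)" for t
  define V where "V = (\<Inter>J\<in>Pow (UNIV::'n set). \<Inter>i\<in>(UNIV::'n set). (\<lambda>v. P J + v) -` Qs i (i \<in> J))"
  have Vopen: "open V" unfolding V_def
    by (intro open_INT ballI finite_Pow_iff[THEN iffD2] finite open_vimage Qopen continuous_intros)
  have "0 \<in> V" unfolding V_def using PQ by auto
  then have nnV: "\<not> negligible V" using open_not_negligible[OF Vopen] by blast
  define N where "N = (\<lambda>t. - \<phi> t) ` cube"
  have "(\<lambda>t. - \<phi> t) differentiable_on cube"
    unfolding differentiable_on_def \<phi>_def w_def
    by (auto intro!: differentiable_sum differentiable_scaleR differentiable_minus differentiable_divide differentiable_prod' differentiable_mult differentiable_add differentiable_diff  differentiable_const diff_nth)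
  then have negN: "negligible N" unfolding N_def
    by (intro negligible_differentiable_image_lowdim) simp
  obtain v where v: "v \<in> V" "v \<notin> N"
    using nnV negN negligible_subset by blast
  define \<psi> where "\<psi> t = \<phi> t + v" for t
  have \<psi>eq: "\<psi> t = (\<Sum>J\<in>Pow UNIV. w J t *\<^sub>R (P J + v))" for t
  proof -
    have "(\<Sum>J\<in>Pow UNIV. w J t *\<^sub>R (P J + v)) = \<phi> t + (\<Sum>J\<in>Pow UNIV. w J t) *\<^sub>R v"
      unfolding \<phi>_def by (simp add: scaleR_right_distrib sum.distrib scaleR_sum_left)
    then show ?thesis using wsum by (simp add: \<psi>_def)
  qed
  have \<psi>ne: "\<psi> t \<noteq> 0" if "t \<in> cube" for t
  proof
    assume "\<psi> t = 0"
    then have "v = - \<phi> t" unfolding \<psi>_def by (simp add: add_eq_0_iff)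
    then show False using v(2) that unfolding N_def by blast
  qed
  have vQ: "P J + v \<in> Qs i (i \<in> J)" for J i using v(1) unfolding V_def by auto
  have wpos: "\<exists>J\<in>Pow UNIV. w J t > 0" if "t \<in> cube" for t
  proof (rule ccontr)
    assume "\<not> ?thesis"
    then have "\<forall>J\<in>Pow UNIV. w J t = 0" using wnn[OF that] by (metis Pow_UNIV UNIV_I less_eq_real_def)
    then have "(\<Sum>J\<in>Pow UNIV. w J t) = 0" by simp
    then show False using wsum by simp
  qed
  have faceP: "\<forall>x\<in>S i. fst (\<psi> t) \<bullet> x > snd (\<psi> t)" if ft: "t \<in> cube" "t$i = 1" for t i
  proof
    fix x assume x: "x \<in> S i"
    obtain J0 where J0: "J0 \<in> Pow UNIV" "w J0 t > 0" using wpos[OF ft(1)] by blast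
    have iJ0: "i \<in> J0" using J0(2) w0p[OF ft(2)] by force
    have "0 < (\<Sum>J\<in>Pow UNIV. w J t * (fst (P J + v) \<bullet> x - snd (P J + v)))"
    proof (rule sum_pos2[OF _ J0(1)])
      show "finite (Pow (UNIV::'n set))" by simp
      have "fst (P J0 + v) \<bullet> x - snd (P J0 + v) > 0"
        using vQ[of J0 i] iJ0 x by (simp add: Qs_def)
      then show "0 < w J0 t * (fst (P J0 + v) \<bullet> x - snd (P J0 + v))"
        using J0(2) by simp
      show "0 \<le> w J t * (fst (P J + v) \<bullet> x - snd (P J + v))" if "J \<in> Pow UNIV" for J
      proof -
        show "0 \<le> w J t * (fst (P J + v) \<bullet> x - snd (P J + v))"
        proof (cases "i \<in> J")
          case True
          then have "fst (P J + v) \<bullet> x - snd (P J + v) > 0"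
            using vQ[of J i] x by (simp add: Qs_def)
          then show ?thesis using wnn[OF ft(1), of J] by simp
        next
          case False
          then show ?thesis using w0p[OF ft(2) False] by simp
        qed
      qed
    qed
    then have "fst (\<psi> t) \<bullet> x - snd (\<psi> t) > 0" unfolding \<psi>eq Lsum .
    then show "fst (\<psi> t) \<bullet> x > snd (\<psi> t)" by simp
  qed
  have faceM: "\<forall>x\<in>S i. fst (\<psi> t) \<bullet> x < snd (\<psi> t)" if ft: "t \<in> cube" "t$i = -1" for t i
  proof
    fix x assume x: "x \<in> S i"
    obtain J0 where J0: "J0 \<in> Pow UNIV" "w J0 t > 0" using wpos[OF ft(1)] by blast
    have iJ0: "i \<notin> J0" using J0(2) w0m[OF ft(2)] by force
    have "0 < (\<Sum>J\<in>Pow UNIV. w J t * (snd (P J + v) - fst (P J + v) \<bullet> x))"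
    proof (rule sum_pos2[OF _ J0(1)])
      show "finite (Pow (UNIV::'n set))" by simp
      have "snd (P J0 + v) - fst (P J0 + v) \<bullet> x > 0"
        using vQ[of J0 i] iJ0 x by (simp add: Qs_def)
      then show "0 < w J0 t * (snd (P J0 + v) - fst (P J0 + v) \<bullet> x)"
        using J0(2) by simp
      show "0 \<le> w J t * (snd (P J + v) - fst (P J + v) \<bullet> x)" if "J \<in> Pow UNIV" for J
      proof -
        show "0 \<le> w J t * (snd (P J + v) - fst (P J + v) \<bullet> x)"
        proof (cases "i \<in> J")
          case False
          then have "snd (P J + v) - fst (P J + v) \<bullet> x > 0"
            using vQ[of J i] x by (simp add: Qs_def)
          then show ?thesis using wnn[OF ft(1), of J] by simp
        next
          case True
          then show ?thesis using w0m[OF ft(2) True] by simp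
        qed
      qed
    qed
    also have "\<dots> = - (\<Sum>J\<in>Pow UNIV. w J t * (fst (P J + v) \<bullet> x - snd (P J + v)))"
      by (simp add: sum_negf[symmetric] algebra_simps)
    finally have "0 < - (fst (\<psi> t) \<bullet> x - snd (\<psi> t))" unfolding \<psi>eq Lsum .
    then show "fst (\<psi> t) \<bullet> x < snd (\<psi> t)" by simp
  qed
  define G where "G t = (\<chi> i. measure (\<mu> i) (hplus (fst (\<psi> t)) (snd (\<psi> t))) - \<alpha> i)" for t
  have \<psi>cont: "isCont \<psi> t" for t
    unfolding \<psi>_def \<phi>_def w_def by (intro continuous_intros) auto
  have Gcont: "continuous_on cube G"
    unfolding G_def
  proof (intro continuous_on_vec_lambda continuous_on_diff continuous_on_const)
    fix i
    show "continuous_on cube (\<lambda>t. measure (\<mu> i) (hplus (fst (\<psi> t)) (snd (\<psi> t))))"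
    proof (intro continuous_at_imp_continuous_on ballI)
      fix t assume "t \<in> cube"
      show "isCont (\<lambda>t. measure (\<mu> i) (hplus (fst (\<psi> t)) (snd (\<psi> t)))) t"
        using isCont_o2[OF \<psi>cont hp_cont[OF cont \<psi>ne[OF \<open>t \<in> cube\<close>]]] .
    qed
  qed
  obtain t where t: "t \<in> cube" "G t = 0"
    using PM[of G] Gcont unfolding cube_def
  proof -
    have "\<exists>t\<in>cube. G t = 0"
    proof (rule PM[of G, folded cube_def])
      show "continuous_on cube G" by (rule Gcont)
      fix t i assume "t \<in> cube"
      { assume "t$i = 1"
        then show "0 \<le> G t $ i" unfolding G_def
          using meas_up[OF cont clS faceP[OF \<open>t \<in> cube\<close>] big] by simp }
      { assume "t$i = -1"
        then show "G t $ i \<le> 0" unfolding G_def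
          using meas_lo[OF cont clS faceM[OF \<open>t \<in> cube\<close>] big] by simp }
    qed
    then show ?thesis using that by blast
  qed
  have meq: "measure (\<mu> i) (hplus (fst (\<psi> t)) (snd (\<psi> t))) = \<alpha> i" for i
    using t(2) unfolding G_def by (simp add: vec_eq_iff)
  show ?thesis
  proof (cases "fst (\<psi> t) = 0")
    case False
    then show ?thesis using meq by blast
  next
    case True
    then have b0: "snd (\<psi> t) \<noteq> 0" using \<psi>ne[OF t(1)] by (cases "\<psi> t") (auto simp: zero_prod_def)
    have m1: "measure (\<mu> i) UNIV = 1" for i
    proof -
      interpret prob_space "\<mu> i" using cont unfolding continuous_prob_def by blast
      have "space (\<mu> i) = UNIV" using cont unfolding continuous_prob_def
        by (metis sets_eq_imp_space_eq space_borel)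
      then show ?thesis using prob_space by simp
    qed
    show ?thesis
    proof (cases "snd (\<psi> t) \<le> 0")
      case True
      have "hplus (fst (\<psi> t)) (snd (\<psi> t)) = UNIV"
        using True \<open>fst (\<psi> t) = 0\<close> by (auto simp: hplus_def)
      then have a1: "\<alpha> i = 1" for i using meq[of i] m1[of i] by simp
      show ?thesis
      proof (intro exI conjI allI)
        show "fst (P UNIV) \<noteq> 0" by (rule P(1))
        fix i
        have sub: "\<forall>x\<in>S i. fst (P UNIV) \<bullet> x > snd (P UNIV)" using PQ[of UNIV i] by (simp add: Qs_def)
        have "\<alpha> i \<le> measure (\<mu> i) (hplus (fst (P UNIV)) (snd (P UNIV)))"
          by (rule meas_up[OF cont clS sub big])
        moreover have "measure (\<mu> i) (hplus (fst (P UNIV)) (snd (P UNIV))) \<le> 1"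
        proof -
          interpret prob_space "\<mu> i" using cont unfolding continuous_prob_def by blast
          show ?thesis by (rule prob_le_1)
        qed
        ultimately show "measure (\<mu> i) (hplus (fst (P UNIV)) (snd (P UNIV))) = \<alpha> i"
          using a1[of i] by linarith
      qed
    next
      case False
      have "hplus (fst (\<psi> t)) (snd (\<psi> t)) = {}"
        using False \<open>fst (\<psi> t) = 0\<close> by (auto simp: hplus_def)
      then have a0: "\<alpha> i = 0" for i using meq[of i] by simp
      show ?thesis
      proof (intro exI conjI allI)
        show "fst (P {}) \<noteq> 0" by (rule P(1))
        fix i
        have sub: "\<forall>x\<in>S i. fst (P {}) \<bullet> x < snd (P {})" using PQ[of "{}" i] by (simp add: Qs_def)
        have "measure (\<mu> i) (hplus (fst (P {})) (snd (P {}))) \<le> \<alpha> i"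
          by (rule meas_lo[OF cont clS sub big])
        moreover have "measure (\<mu> i) (hplus (fst (P {})) (snd (P {}))) \<ge> 0" by simp
        ultimately show "measure (\<mu> i) (hplus (fst (P {})) (snd (P {}))) = \<alpha> i"
          using a0[of i] by linarith
      qed
    qed
  qed
qed

lemma inner_approx:
  fixes M :: "'a::euclidean_space measure"
  assumes cp: "continuous_prob M" and S: "closed S" and gt: "measure M S > c"
  shows "\<exists>r. measure M (S \<inter> cball 0 r) > c"
proof -
  have sM: "sets M = sets borel" and ps: "prob_space M"
    using cp unfolding continuous_prob_def by auto
  interpret prob_space M by (rule ps)
  define A where "A k = S \<inter> cball 0 (real k)" for k :: nat
  have "range A \<subseteq> sets M" unfolding A_def sM
    by (auto intro!: borel_closed closed_Int S)
  moreover have "incseq A" unfolding A_def incseq_def by auto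
  moreover have "(\<Union>k. A k) = S"
  proof -
    have "x \<in> (\<Union>k. A k)" if "x \<in> S" for x
    proof -
      obtain k :: nat where "norm x \<le> real k" using real_arch_simple by blast
      then show ?thesis using that by (auto simp: A_def)
    qed
    then show ?thesis by (auto simp: A_def)
  qed
  ultimately have "(\<lambda>k. measure M (A k)) \<longlonglongrightarrow> measure M S"
    using finite_Lim_measure_incseq[of A] by simp
  then have "eventually (\<lambda>k. measure M (A k) > c) sequentially"
    using gt order_tendstoD(1) by blast
  then obtain k where "measure M (A k) > c" by (meson eventually_sequentially order_refl)
  then show ?thesis unfolding A_def by blast
qed

theorem mainTheorem5:
  fixes \<mu> :: "'n::finite \<Rightarrow> (real^'n) measure"
    and \<alpha> :: "'n \<Rightarrow> real"
    and S :: "'n \<Rightarrow> (real^'n) set"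
  assumes cont: "\<And>i. continuous_prob (\<mu> i)"
    and alpha: "\<And>i. 0 \<le> \<alpha> i \<and> \<alpha> i \<le> 1"
    and cases:
      "((\<forall>i. compact (S i)) \<and> separable_by_hyperplanes S \<and>
          (\<forall>i. measure (\<mu> i) (S i) \<ge> max (\<alpha> i) (1 - \<alpha> i)))
       \<or> ((\<forall>i. closed (S i)) \<and> separable_by_hyperplanes S \<and>
          (\<forall>i. measure (\<mu> i) (S i) > max (\<alpha> i) (1 - \<alpha> i)))"
  shows "\<exists>a b. a \<noteq> 0 \<and> (\<forall>i. measure (\<mu> i) (hplus a b) = \<alpha> i)"
  using cases
proof
  assume h: "(\<forall>i. compact (S i)) \<and> separable_by_hyperplanes S \<and>
          (\<forall>i. measure (\<mu> i) (S i) \<ge> max (\<alpha> i) (1 - \<alpha> i))"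
  show ?thesis by (rule main_compact[OF cont, of S]) (use h in auto)
next
  assume h: "(\<forall>i. closed (S i)) \<and> separable_by_hyperplanes S \<and>
          (\<forall>i. measure (\<mu> i) (S i) > max (\<alpha> i) (1 - \<alpha> i))"
  have "\<forall>i. \<exists>r. measure (\<mu> i) (S i \<inter> cball 0 r) > max (\<alpha> i) (1 - \<alpha> i)"
    using inner_approx[OF cont] h by blast
  then obtain r where r: "\<And>i. measure (\<mu> i) (S i \<inter> cball 0 (r i)) > max (\<alpha> i) (1 - \<alpha> i)"
    by metis
  define K where "K i = S i \<inter> cball 0 (r i)" for i
  show ?thesis
  proof (rule main_compact[OF cont, of K])
    show "compact (K i)" for i unfolding K_def using h by (auto intro: closed_Int_compact)
    show "separable_by_hyperplanes K"
      using h unfolding separable_by_hyperplanes_def K_def by blast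
    show "measure (\<mu> i) (K i) \<ge> max (\<alpha> i) (1 - \<alpha> i)" for i
      using r[of i] unfolding K_def by linarith
  qed
qed

end
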